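(* Let $\Omega\subset\mathbb{R}^n$ ($n\ge1$) be a bounded domain, $T>0$, $\delta\in(0,1)\cup(1,2)$, $\bar Q:=\bar\Omega\times[0,T]$ and $Q:=\Omega\times(0,T]$. Let $u$ be a classical solution of the initial-boundary value problem described in the context, and suppose $u\in C^{2,\bar\delta}(\bar Q)$. Suppose moreover that the boundary value problem \[ L_0w(x)=f(x,0)\ \text{ for } x\in\Omega,\qquad w(x)=\psi(x,0)\ \text{ for } x\in\partial\Omega \] has at most one solution $w$, where $L_0w(x):=-\sum_{i,j=1}^n p_{ij}(x,0)\,\partial^2 w/\partial x_i\partial x_j+\sum_{i=1}^n q_i(x,0)\,\partial w/\partial x_i+r(x,0)w$. Then the initial value $\phi_0$ is a solution of this boundary value problem and hence is uniquely determined by $L_0$, $f(\cdot,0)$ and $\psi(\cdot,0)$ (it is the unique solution of that problem).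
   Context: Set $\bar\delta=1$ if $0<\delta<1$ and $\bar\delta=2$ if $1<\delta<2$. The Caputo fractional derivative is \[ D_t^\delta g(x,t):=\frac{1}{\Gamma(\bar\delta-\delta)}\int_0^t (t-s)^{\bar\delta-\delta-1}\,\frac{\partial^{\bar\delta}g(x,s)}{\partial s^{\bar\delta}}\,ds,\qquad x\in\Omega,\ 0<t\le T. \] The problem is: $D_t^\delta u-\sum_{i,j=1}^n p_{ij}(x,t)\,\partial^2u/\partial x_i\partial x_j+\sum_{i=1}^n q_i(x,t)\,\partial u/\partial x_i+r(x,t)u=f(x,t)$ for $(x,t)\in Q$; $u(x,t)=\psi(x,t)$ for $(x,t)\in\partial\Omega\times(0,T]$; $u(x,0)=\phi_0(x)$ for $x\in\bar\Omega$; and, only when $1<\delta<2$, $u_t(x,0)=\phi_1(x)$ for $x\in\Omega$. The spatial operator is uniformly elliptic on $Q$; $p_{ij},q_i,r,\psi,\phi_0,\phi_1$ are continuous on the closures of their domains; $f$ is continuous on $\bar Q$; and $\phi_0(x)=\psi(x,0)$ for all $x\in\partial\Omega$. A classical solution is a function $u$ continuous on $\bar Q$ for which $D_t^\delta u$, $\partial u/\partial x_i$, $\partial^2u/\partial x_i\partial x_j$ exist at every point of $Q$ and the equation and conditions hold pointwise. $C^{2,\bar\delta}(\bar Q)$ denotes the set of $w\in C(\bar Q)$ such that $\partial w/\partial x_i$, $\partial^2w/\partial x_i\partial x_j$ ($1\le i,j\le n$) and $\partial^k w/\partial t^k$ for $k=1,\bar\delta$ all lie in $C(\bar Q)$. 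*)

theory Defs
  imports "HOL-Analysis.Analysis"
begin

text \<open>Conventions.  Space is \<open>real^'n\<close> (dimension n = CARD('n) \<ge> 1).
  Functions of (x,t) are curried: \<open>u x t\<close>.  \<open>axis i 1\<close> is the i-th unit vector.\<close>

definition dbar :: "real \<Rightarrow> nat" where
  "dbar \<delta> = (if \<delta> < 1 then 1 else 2)"

definition pdx :: "'n::finite \<Rightarrow> (real^'n \<Rightarrow> real) \<Rightarrow> real^'n \<Rightarrow> real" where
  "pdx i v x = deriv (\<lambda>h. v (x + h *\<^sub>R axis i 1)) 0"

definition pdx_exists :: "'n::finite \<Rightarrow> (real^'n \<Rightarrow> real) \<Rightarrow> real^'n \<Rightarrow> bool" where
  "pdx_exists i v x \<longleftrightarrow> (\<lambda>h. v (x + h *\<^sub>R axis i 1)) differentiable (at 0)"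

definition dtk :: "nat \<Rightarrow> (real^'n \<Rightarrow> real \<Rightarrow> real) \<Rightarrow> real^'n \<Rightarrow> real \<Rightarrow> real" where
  "dtk k u x t = (deriv ^^ k) (u x) t"

definition caputo :: "real \<Rightarrow> (real^'n \<Rightarrow> real \<Rightarrow> real) \<Rightarrow> real^'n \<Rightarrow> real \<Rightarrow> real" where
  "caputo \<delta> u x t = 1 / Gamma (real (dbar \<delta>) - \<delta>) *
     integral {0..t} (\<lambda>s. (t - s) powr (real (dbar \<delta>) - \<delta> - 1) * dtk (dbar \<delta>) u x s)"

definition caputo_exists :: "real \<Rightarrow> (real^'n \<Rightarrow> real \<Rightarrow> real) \<Rightarrow> real^'n \<Rightarrow> real \<Rightarrow> bool" where
  "caputo_exists \<delta> u x t \<longleftrightarrow>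
     (\<forall>s\<in>{0<..<t}. \<forall>k<dbar \<delta>. (deriv ^^ k) (u x) differentiable (at s)) \<and>
     (\<lambda>s. (t - s) powr (real (dbar \<delta>) - \<delta> - 1) * dtk (dbar \<delta>) u x s) integrable_on {0..t}"

definition Lop :: "('n::finite \<Rightarrow> 'n \<Rightarrow> real^'n \<Rightarrow> real \<Rightarrow> real) \<Rightarrow> ('n \<Rightarrow> real^'n \<Rightarrow> real \<Rightarrow> real)
    \<Rightarrow> (real^'n \<Rightarrow> real \<Rightarrow> real) \<Rightarrow> real \<Rightarrow> (real^'n \<Rightarrow> real) \<Rightarrow> real^'n \<Rightarrow> real" where
  "Lop p q r t v x = - (\<Sum>i\<in>UNIV. \<Sum>j\<in>UNIV. p i j x t * pdx i (pdx j v) x)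
       + (\<Sum>i\<in>UNIV. q i x t * pdx i v x) + r x t * v x"

definition unif_elliptic :: "(real^'n) set \<Rightarrow> real \<Rightarrow> ('n::finite \<Rightarrow> 'n \<Rightarrow> real^'n \<Rightarrow> real \<Rightarrow> real) \<Rightarrow> bool" where
  "unif_elliptic \<Omega> T p \<longleftrightarrow> (\<exists>c>0. \<forall>x\<in>\<Omega>. \<forall>t\<in>{0<..T}. \<forall>\<xi>::real^'n.
      (\<Sum>i\<in>UNIV. \<Sum>j\<in>UNIV. p i j x t * \<xi>$i * \<xi>$j) \<ge> c * (norm \<xi>)\<^sup>2)"

definition classical_sol :: "(real^'n) set \<Rightarrow> real \<Rightarrow> real
    \<Rightarrow> ('n::finite \<Rightarrow> 'n \<Rightarrow> real^'n \<Rightarrow> real \<Rightarrow> real) \<Rightarrow> ('n \<Rightarrow> real^'n \<Rightarrow> real \<Rightarrow> real)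
    \<Rightarrow> (real^'n \<Rightarrow> real \<Rightarrow> real) \<Rightarrow> (real^'n \<Rightarrow> real \<Rightarrow> real) \<Rightarrow> (real^'n \<Rightarrow> real \<Rightarrow> real)
    \<Rightarrow> (real^'n \<Rightarrow> real) \<Rightarrow> (real^'n \<Rightarrow> real) \<Rightarrow> (real^'n \<Rightarrow> real \<Rightarrow> real) \<Rightarrow> bool" where
  "classical_sol \<Omega> T \<delta> p q r f \<psi> \<phi>0 \<phi>1 u \<longleftrightarrow>
     continuous_on (closure \<Omega> \<times> {0..T}) (\<lambda>(x,t). u x t) \<and>
     (\<forall>x\<in>\<Omega>. \<forall>t\<in>{0<..T}. caputo_exists \<delta> u x t \<and>
        (\<forall>i. pdx_exists i (\<lambda>y. u y t) x) \<and>
        (\<forall>i j. pdx_exists i (pdx j (\<lambda>y. u y t)) x)) \<and>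
     (\<forall>x\<in>\<Omega>. \<forall>t\<in>{0<..T}. caputo \<delta> u x t + Lop p q r t (\<lambda>y. u y t) x = f x t) \<and>
     (\<forall>x\<in>frontier \<Omega>. \<forall>t\<in>{0<..T}. u x t = \<psi> x t) \<and>
     (\<forall>x\<in>closure \<Omega>. u x 0 = \<phi>0 x) \<and>
     (dbar \<delta> = 2 \<longrightarrow> (\<forall>x\<in>\<Omega>. ((\<lambda>s. u x s) has_real_derivative \<phi>1 x) (at 0 within {0..T})))"

definition C2dbar :: "(real^'n::finite) set \<Rightarrow> real \<Rightarrow> real \<Rightarrow> (real^'n \<Rightarrow> real \<Rightarrow> real) \<Rightarrow> bool" where
  "C2dbar \<Omega> T \<delta> w \<longleftrightarrow>
     continuous_on (closure \<Omega> \<times> {0..T}) (\<lambda>(x,t). w x t) \<and>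
     (\<forall>i. \<exists>G. continuous_on (closure \<Omega> \<times> {0..T}) G \<and>
        (\<forall>x\<in>\<Omega>. \<forall>t\<in>{0<..T}. pdx_exists i (\<lambda>y. w y t) x \<and> pdx i (\<lambda>y. w y t) x = G (x,t))) \<and>
     (\<forall>i j. \<exists>G. continuous_on (closure \<Omega> \<times> {0..T}) G \<and>
        (\<forall>x\<in>\<Omega>. \<forall>t\<in>{0<..T}. pdx_exists i (pdx j (\<lambda>y. w y t)) x \<and>
            pdx i (pdx j (\<lambda>y. w y t)) x = G (x,t))) \<and>
     (\<forall>k\<in>{1, dbar \<delta>}. \<exists>G. continuous_on (closure \<Omega> \<times> {0..T}) G \<and>
        (\<forall>x\<in>\<Omega>. \<forall>t\<in>{0<..<T}. (deriv ^^ (k - 1)) (w x) differentiable (at t) \<and>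
            dtk k w x t = G (x,t)))"

definition bvp_sol :: "(real^'n) set \<Rightarrow> ('n::finite \<Rightarrow> 'n \<Rightarrow> real^'n \<Rightarrow> real \<Rightarrow> real)
    \<Rightarrow> ('n \<Rightarrow> real^'n \<Rightarrow> real \<Rightarrow> real) \<Rightarrow> (real^'n \<Rightarrow> real \<Rightarrow> real) \<Rightarrow> (real^'n \<Rightarrow> real \<Rightarrow> real)
    \<Rightarrow> (real^'n \<Rightarrow> real \<Rightarrow> real) \<Rightarrow> (real^'n \<Rightarrow> real) \<Rightarrow> bool" where
  "bvp_sol \<Omega> p q r f \<psi> w \<longleftrightarrow>
     continuous_on (closure \<Omega>) w \<and>
     (\<forall>x\<in>\<Omega>. (\<forall>i. pdx_exists i w x) \<and> (\<forall>i j. pdx_exists i (pdx j w) x)) \<and>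
     (\<forall>x\<in>\<Omega>. Lop p q r 0 w x = f x 0) \<and>
     (\<forall>x\<in>frontier \<Omega>. w x = \<psi> x 0)"

end

theory Submission
  imports Defs
begin


lemma int_tms:
  fixes a t :: real
  assumes "a > -1" "t \<ge> 0"
  shows "((\<lambda>s. (t - s) powr a) has_integral t powr (a+1)/(a+1)) {0..t}"
proof -
  let ?I = "t powr (a+1)/(a+1)"
  have h1: "((\<lambda>x. x powr a) has_integral ?I) {0..t}"
    using has_integral_powr_from_0[OF assms] .
  have h2: "((\<lambda>x. (-x) powr a) has_integral ?I) {-t..-0}"
    by (rule has_integral_reflect_lemma_real[OF h1])
  have e1: "{-t..-0} = {0 + -t..t + -t}" by simp
  have h3: "(((\<lambda>x. (-x) powr a) \<circ> (+) (-t)) has_integral ?I) {0..t}"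
    using h2 unfolding e1 by (rule has_integral_shift_Icc_real[THEN iffD2])
  have e2: "((\<lambda>x. (-x) powr a) \<circ> (+) (-t)) = (\<lambda>s. (t - s) powr a)"
    by (rule ext) (simp add: o_def)
  show ?thesis using h3 unfolding e2 .
qed

lemma tend0:
  fixes G :: "('a::topological_space \<times> real) \<Rightarrow> real"
  assumes "continuous_on (A \<times> {0..T}) G" "x \<in> A" "T > 0"
  shows "((\<lambda>t. G (x,t)) \<longlongrightarrow> G (x,0)) (at_right 0)"
proof (rule continuous_on_tendsto_compose[OF assms(1)])
  show "((\<lambda>t. (x, t)) \<longlongrightarrow> (x, 0)) (at_right 0)"
    by (intro tendsto_intros)
  show "(x, 0) \<in> A \<times> {0..T}" using assms by auto
  show "\<forall>\<^sub>F t in at_right 0. (x, t) \<in> A \<times> {0..T}"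
    unfolding eventually_at_right_field using assms by (intro exI[of _ T]) auto
qed



lemma pdx_limit:
  fixes w :: "real \<Rightarrow> real^'n::finite \<Rightarrow> real" and w0 :: "real^'n \<Rightarrow> real"
    and G :: "(real^'n) \<times> real \<Rightarrow> real"
  assumes oO: "open \<Omega>" and T: "T > 0"
    and cG: "continuous_on (closure \<Omega> \<times> {0..T}) G"
    and ex: "\<forall>y\<in>\<Omega>. \<forall>t\<in>{0<..T}. pdx_exists i (w t) y \<and> pdx i (w t) y = G (y,t)"
    and conv: "\<forall>y\<in>\<Omega>. ((\<lambda>t. w t y) \<longlongrightarrow> w0 y) (at_right 0)"
    and y: "y \<in> \<Omega>"
  shows "pdx_exists i w0 y \<and> pdx i w0 y = G (y,0)"
proof -
  define e1 :: "real^'n" where "e1 = axis i 1"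
  have ne1: "norm e1 = 1" by (simp add: e1_def)
  obtain e where e: "e > 0" "ball y e \<subseteq> \<Omega>" using oO y open_contains_ball by blast
  have inO: "y + h *\<^sub>R e1 \<in> \<Omega>" if "\<bar>h\<bar> < e" for h
  proof -
    have "dist y (y + h *\<^sub>R e1) = \<bar>h\<bar>" by (simp add: dist_norm ne1)
    then show ?thesis using e that by auto
  qed
  have D: "((\<lambda>h. w t (y + h *\<^sub>R e1)) has_real_derivative G (y + h *\<^sub>R e1, t)) (at h)"
    if "\<bar>h\<bar> < e" "t \<in> {0<..T}" for h t
  proof -
    let ?z = "y + h *\<^sub>R e1"
    have "pdx_exists i (w t) ?z" "pdx i (w t) ?z = G (?z,t)" using ex inO[OF that(1)] that(2) by auto
    then have "((\<lambda>k. w t (?z + k *\<^sub>R e1)) has_real_derivative G (?z,t)) (at 0)"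
      unfolding pdx_exists_def pdx_def e1_def
      by (metis DERIV_deriv_iff_real_differentiable)
    then have "((\<lambda>k. w t (y + (k + h) *\<^sub>R e1)) has_real_derivative G (?z,t)) (at 0)"
      by (simp add: algebra_simps scaleR_add_left)
    then show ?thesis using DERIV_shift[of "\<lambda>h. w t (y + h *\<^sub>R e1)" "G (?z,t)" 0 h] by simp
  qed
  define g0 where "g0 h = w0 (y + h *\<^sub>R e1)" for h
  have lim: "((\<lambda>h. (g0 (0 + h) - g0 0) / h) \<longlongrightarrow> G (y,0)) (at 0)"
  proof (rule tendstoI)
    fix \<epsilon> :: real assume "\<epsilon> > 0"
    have "(y,0) \<in> closure \<Omega> \<times> {0..T}" using y T closure_subset by auto
    then obtain \<eta> where \<eta>: "\<eta> > 0" "\<And>p. p \<in> closure \<Omega> \<times> {0..T} \<Longrightarrow> dist p (y,0) < \<eta> \<Longrightarrow>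
       dist (G p) (G (y,0)) < \<epsilon>/2"
      using cG \<open>\<epsilon> > 0\<close> unfolding continuous_on_iff by (metis half_gt_zero)
    define d where "d = min e (\<eta>/2)"
    have d: "d > 0" using e \<eta> by (simp add: d_def)
    have bnd: "\<bar>g0 h - g0 0 - h * G (y,0)\<bar> \<le> \<bar>h\<bar> * (\<epsilon>/2)" if h: "\<bar>h\<bar> < d" "h \<noteq> 0" for h
    proof -
      have bt: "\<bar>w t (y + h *\<^sub>R e1) - w t (y + 0 *\<^sub>R e1) - h * G (y,0)\<bar> \<le> \<bar>h\<bar> * (\<epsilon>/2)"
        if t: "0 < t" "t < min T (\<eta>/2)" for t
      proof -
        have tT: "t \<in> {0<..T}" using t by auto
        have "\<exists>\<xi>. \<bar>\<xi>\<bar> \<le> \<bar>h\<bar> \<and> w t (y + h *\<^sub>R e1) - w t (y + 0 *\<^sub>R e1) = h * G (y + \<xi> *\<^sub>R e1, t)"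
        proof (cases "h > 0")
          case True
          have "\<exists>z>0. z < h \<and> w t (y + h *\<^sub>R e1) - w t (y + 0 *\<^sub>R e1) = (h - 0) * G (y + z *\<^sub>R e1, t)"
            by (rule MVT2[OF True]) (rule D, use h d_def tT in auto)
          then obtain z where "z > 0" "z < h" "w t (y + h *\<^sub>R e1) - w t (y + 0 *\<^sub>R e1) = (h - 0) * G (y + z *\<^sub>R e1, t)" by blast
          then show ?thesis by (intro exI[of _ z]) auto
        next
          case False
          then have hn: "h < 0" using h by auto
          have "\<exists>z>h. z < 0 \<and> w t (y + 0 *\<^sub>R e1) - w t (y + h *\<^sub>R e1) = (0 - h) * G (y + z *\<^sub>R e1, t)"
            by (rule MVT2[OF hn]) (rule D, use h d_def tT in auto)
          then obtain z where "z > h" "z < 0" "w t (y + 0 *\<^sub>R e1) - w t (y + h *\<^sub>R e1) = (0 - h) * G (y + z *\<^sub>R e1, t)" by blast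
          then show ?thesis by (intro exI[of _ z]) (auto simp: algebra_simps)
        qed
        then obtain \<xi> where \<xi>: "\<bar>\<xi>\<bar> \<le> \<bar>h\<bar>" "w t (y + h *\<^sub>R e1) - w t (y + 0 *\<^sub>R e1) = h * G (y + \<xi> *\<^sub>R e1, t)" by blast
        have xin: "y + \<xi> *\<^sub>R e1 \<in> closure \<Omega>" using inO[of \<xi>] \<xi>(1) h d_def closure_subset by auto
        have "dist (y + \<xi> *\<^sub>R e1, t) (y, 0) \<le> \<bar>dist (y + \<xi> *\<^sub>R e1) y\<bar> + \<bar>dist t 0\<bar>"
          unfolding dist_Pair_Pair by (rule sqrt_sum_squares_le_sum_abs)
        also have "\<dots> = \<bar>\<xi>\<bar> + t" using t by (simp add: dist_norm ne1)
        also have "\<dots> < \<eta>" using \<xi>(1) h t d_def by auto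
        finally have "dist (G (y + \<xi> *\<^sub>R e1, t)) (G (y,0)) < \<epsilon>/2"
          using \<eta>(2) xin tT by auto
        then have "\<bar>G (y + \<xi> *\<^sub>R e1, t) - G (y,0)\<bar> \<le> \<epsilon>/2" by (simp add: dist_real_def)
        then have "\<bar>h\<bar> * \<bar>G (y + \<xi> *\<^sub>R e1, t) - G (y,0)\<bar> \<le> \<bar>h\<bar> * (\<epsilon>/2)"
          by (rule mult_left_mono) auto
        moreover have "w t (y + h *\<^sub>R e1) - w t (y + 0 *\<^sub>R e1) - h * G (y,0) = h * (G (y + \<xi> *\<^sub>R e1, t) - G (y,0))"
          using \<xi>(2) by (simp add: algebra_simps)
        ultimately show ?thesis by (simp add: abs_mult)
      qed
      have "((\<lambda>t. \<bar>w t (y + h *\<^sub>R e1) - w t (y + 0 *\<^sub>R e1) - h * G (y,0)\<bar>) \<longlongrightarrow>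
              \<bar>w0 (y + h *\<^sub>R e1) - w0 (y + 0 *\<^sub>R e1) - h * G (y,0)\<bar>) (at_right 0)"
        using conv inO[of h] inO[of 0] h d_def e by (intro tendsto_intros) auto
      moreover have "\<forall>\<^sub>F t in at_right 0. \<bar>w t (y + h *\<^sub>R e1) - w t (y + 0 *\<^sub>R e1) - h * G (y,0)\<bar> \<le> \<bar>h\<bar> * (\<epsilon>/2)"
        unfolding eventually_at_right_field using T \<eta> bt by (intro exI[of _ "min T (\<eta>/2)"]) auto
      ultimately have "\<bar>w0 (y + h *\<^sub>R e1) - w0 (y + 0 *\<^sub>R e1) - h * G (y,0)\<bar> \<le> \<bar>h\<bar> * (\<epsilon>/2)"
        by (rule tendsto_upperbound) simp
      then show ?thesis by (simp add: g0_def)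
    qed
    have key: "dist ((g0 (0 + h) - g0 0) / h) (G (y,0)) < \<epsilon>" if h: "h \<noteq> 0" "\<bar>h\<bar> < d" for h
    proof -
      have "(g0 (0 + h) - g0 0) / h - G (y,0) = (g0 h - g0 0 - h * G (y,0)) / h"
        using h by (simp add: field_simps)
      then have "dist ((g0 (0 + h) - g0 0) / h) (G (y,0)) = \<bar>g0 h - g0 0 - h * G (y,0)\<bar> / \<bar>h\<bar>"
        by (simp add: dist_real_def)
      also have "\<dots> \<le> \<epsilon>/2" using bnd[OF h(2) h(1)] h by (simp add: divide_le_eq mult.commute)
      also have "\<dots> < \<epsilon>" using \<open>\<epsilon> > 0\<close> by simp
      finally show ?thesis .
    qed
    show "\<forall>\<^sub>F h in at 0. dist ((g0 (0 + h) - g0 0) / h) (G (y,0)) < \<epsilon>"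
      unfolding eventually_at using d by (intro exI[of _ d] conjI ballI allI impI key) auto
  qed
  then have "(g0 has_real_derivative G (y,0)) (at 0)" by (simp add: DERIV_def)
  moreover have "g0 = (\<lambda>h. w0 (y + h *\<^sub>R axis i 1))" unfolding e1_def by (rule ext) (simp add: g0_def e1_def)
  ultimately have "((\<lambda>h. w0 (y + h *\<^sub>R axis i 1)) has_real_derivative G (y,0)) (at 0)"
    by simp
  then show ?thesis unfolding pdx_exists_def pdx_def
    using DERIV_imp_deriv real_differentiable_def by blast
qed



lemma caputo_lim:
  fixes u :: "real^'n::finite \<Rightarrow> real \<Rightarrow> real" and Gk :: "(real^'n) \<times> real \<Rightarrow> real"
  assumes T: "T > 0" and delta: "(0 < \<delta> \<and> \<delta> < 1) \<or> (1 < \<delta> \<and> \<delta> < 2)"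
    and cK: "continuous_on K Gk" "compact K"
    and dk: "\<forall>t\<in>{0<..<T}. dtk (dbar \<delta>) u x t = Gk (x,t) \<and> (x,t) \<in> K"
    and ce: "\<forall>t\<in>{0<..T}. caputo_exists \<delta> u x t"
  shows "((\<lambda>t. caputo \<delta> u x t) \<longlongrightarrow> 0) (at_right 0)"
proof -
  define \<alpha> where "\<alpha> = real (dbar \<delta>) - \<delta>"
  have \<alpha>: "0 < \<alpha>" "\<alpha> < 1" using delta by (auto simp: \<alpha>_def dbar_def)
  have "bounded (Gk ` K)" using cK compact_continuous_image compact_imp_bounded by blast
  then obtain M where M: "\<forall>p\<in>K. \<bar>Gk p\<bar> \<le> M" unfolding bounded_iff by auto
  define M1 where "M1 = max M 0"
  have M1: "M1 \<ge> 0" "\<forall>p\<in>K. \<bar>Gk p\<bar> \<le> M1" using M by (auto simp: M1_def)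
  have gpos: "Gamma \<alpha> > 0" using \<alpha> Gamma_real_pos by blast
  have bound: "norm (caputo \<delta> u x t) \<le> M1 / (Gamma \<alpha> * \<alpha>) * t powr \<alpha>" if t: "0 < t" "t < T" for t
  proof -
    define F where "F s = (t - s) powr (real (dbar \<delta>) - \<delta> - 1) * dtk (dbar \<delta>) u x s" for s
    define F' where "F' s = (if s \<in> {0<..<t} then F s else 0)" for s
    have Fi: "F integrable_on {0..t}" using ce t unfolding caputo_exists_def F_def by auto
    have neg: "negligible {0,t}" by simp
    have eqi: "integral {0..t} F = integral {0..t} F'"
      by (rule integral_spike[OF neg]) (auto simp: F'_def)
    have F'i: "F' integrable_on {0..t}"
      by (rule integrable_spike_finite[of "{0,t}", OF _ _ Fi]) (auto simp: F'_def)
    have gi: "((\<lambda>s. M1 * (t - s) powr (\<alpha> - 1)) has_integral M1 * (t powr \<alpha> / \<alpha>)) {0..t}"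
      using has_integral_mult_right[OF int_tms[of "\<alpha> - 1" t]] \<alpha> t by simp
    have le: "norm (F' s) \<le> M1 * (t - s) powr (\<alpha> - 1)" if "s \<in> {0..t}" for s
    proof (cases "s \<in> {0<..<t}")
      case True
      then have "s \<in> {0<..<T}" using t by auto
      then have "\<bar>dtk (dbar \<delta>) u x s\<bar> \<le> M1" using dk M1 by auto
      then show ?thesis using True
        by (auto simp: F'_def F_def \<alpha>_def abs_mult mult.commute intro!: mult_right_mono)
    qed (use M1 in \<open>auto simp: F'_def\<close>)
    have "norm (integral {0..t} F') \<le> integral {0..t} (\<lambda>s. M1 * (t - s) powr (\<alpha> - 1))"
      by (rule integral_norm_bound_integral[OF F'i _ le]) (use gi in auto)
    also have "\<dots> = M1 * (t powr \<alpha> / \<alpha>)" using gi integral_unique by blast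
    finally have I: "\<bar>integral {0..t} F\<bar> \<le> M1 * (t powr \<alpha> / \<alpha>)" using eqi by simp
    have "caputo \<delta> u x t = 1 / Gamma \<alpha> * integral {0..t} F"
      unfolding caputo_def F_def \<alpha>_def by simp
    then have "norm (caputo \<delta> u x t) = \<bar>integral {0..t} F\<bar> / Gamma \<alpha>"
      using gpos by (simp add: abs_mult)
    also have "\<dots> \<le> M1 * (t powr \<alpha> / \<alpha>) / Gamma \<alpha>"
      using I gpos by (intro divide_right_mono) auto
    finally show ?thesis by (simp add: field_simps)
  qed
  show ?thesis
  proof (rule Lim_null_comparison)
    show "\<forall>\<^sub>F t in at_right 0. norm (caputo \<delta> u x t) \<le> M1 / (Gamma \<alpha> * \<alpha>) * t powr \<alpha>"
      unfolding eventually_at_right_field using T bound by (intro exI[of _ T]) auto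
    have "((\<lambda>t. t powr \<alpha>) \<longlongrightarrow> 0) (at_right 0)"
      by (rule tendsto_zero_powrI[of "\<lambda>t. t"]) (auto intro: tendsto_ident_at gt_ex simp: \<alpha> eventually_at_right_field)
    then show "((\<lambda>t. M1 / (Gamma \<alpha> * \<alpha>) * t powr \<alpha>) \<longlongrightarrow> 0) (at_right 0)"
      by (rule tendsto_mult_right_zero)
  qed
qed

theorem corollary2p7:
  fixes \<Omega> :: "(real^'n) set" and T \<delta> :: real
    and p :: "'n \<Rightarrow> 'n \<Rightarrow> real^'n \<Rightarrow> real \<Rightarrow> real" and q :: "'n \<Rightarrow> real^'n \<Rightarrow> real \<Rightarrow> real"
    and r f \<psi> u :: "real^'n \<Rightarrow> real \<Rightarrow> real" and \<phi>0 \<phi>1 :: "real^'n \<Rightarrow> real"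
  assumes dom: "open \<Omega>" "connected \<Omega>" "bounded \<Omega>" "\<Omega> \<noteq> {}"
    and T: "T > 0"
    and delta: "(0 < \<delta> \<and> \<delta> < 1) \<or> (1 < \<delta> \<and> \<delta> < 2)"
    and ell: "unif_elliptic \<Omega> T p"
    and cp: "\<And>i j. continuous_on (closure \<Omega> \<times> {0..T}) (\<lambda>(x,t). p i j x t)"
    and cq: "\<And>i. continuous_on (closure \<Omega> \<times> {0..T}) (\<lambda>(x,t). q i x t)"
    and cr: "continuous_on (closure \<Omega> \<times> {0..T}) (\<lambda>(x,t). r x t)"
    and cf: "continuous_on (closure \<Omega> \<times> {0..T}) (\<lambda>(x,t). f x t)"
    and c\<psi>: "continuous_on (frontier \<Omega> \<times> {0..T}) (\<lambda>(x,t). \<psi> x t)"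
    and c\<phi>0: "continuous_on (closure \<Omega>) \<phi>0"
    and c\<phi>1: "continuous_on (closure \<Omega>) \<phi>1"
    and compat: "\<forall>x\<in>frontier \<Omega>. \<phi>0 x = \<psi> x 0"
    and sol: "classical_sol \<Omega> T \<delta> p q r f \<psi> \<phi>0 \<phi>1 u"
    and reg: "C2dbar \<Omega> T \<delta> u"
    and uniq: "\<forall>w1 w2. bvp_sol \<Omega> p q r f \<psi> w1 \<and> bvp_sol \<Omega> p q r f \<psi> w2
                 \<longrightarrow> (\<forall>x\<in>closure \<Omega>. w1 x = w2 x)"
  shows "bvp_sol \<Omega> p q r f \<psi> \<phi>0 \<and>
         (\<forall>w. bvp_sol \<Omega> p q r f \<psi> w \<longrightarrow> (\<forall>x\<in>closure \<Omega>. w x = \<phi>0 x))"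
  
proof -
  let ?S = "closure \<Omega> \<times> {0..T}"
  have cu: "continuous_on ?S (\<lambda>(x,t). u x t)"
    and ce: "\<forall>x\<in>\<Omega>. \<forall>t\<in>{0<..T}. caputo_exists \<delta> u x t"
    and eq: "\<forall>x\<in>\<Omega>. \<forall>t\<in>{0<..T}. caputo \<delta> u x t + Lop p q r t (\<lambda>y. u y t) x = f x t"
    and ini: "\<forall>x\<in>closure \<Omega>. u x 0 = \<phi>0 x"
    using sol unfolding classical_sol_def by auto
  have "\<forall>i. \<exists>G. continuous_on ?S G \<and>
        (\<forall>x\<in>\<Omega>. \<forall>t\<in>{0<..T}. pdx_exists i (\<lambda>y. u y t) x \<and> pdx i (\<lambda>y. u y t) x = G (x,t))"
    using reg unfolding C2dbar_def by blast
  then obtain G1 where G1: "\<forall>i. continuous_on ?S (G1 i) \<and>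
        (\<forall>x\<in>\<Omega>. \<forall>t\<in>{0<..T}. pdx_exists i (\<lambda>y. u y t) x \<and> pdx i (\<lambda>y. u y t) x = G1 i (x,t))"
    by (rule choice[THEN exE])
  have "\<forall>i j. \<exists>G. continuous_on ?S G \<and>
        (\<forall>x\<in>\<Omega>. \<forall>t\<in>{0<..T}. pdx_exists i (pdx j (\<lambda>y. u y t)) x \<and>
            pdx i (pdx j (\<lambda>y. u y t)) x = G (x,t))"
    using reg unfolding C2dbar_def by blast
  then have "\<forall>i. \<exists>g. \<forall>j. continuous_on ?S (g j) \<and>
        (\<forall>x\<in>\<Omega>. \<forall>t\<in>{0<..T}. pdx_exists i (pdx j (\<lambda>y. u y t)) x \<and>
            pdx i (pdx j (\<lambda>y. u y t)) x = g j (x,t))"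
    by (intro allI choice) blast
  then obtain G2 where G2: "\<forall>i j. continuous_on ?S (G2 i j) \<and>
        (\<forall>x\<in>\<Omega>. \<forall>t\<in>{0<..T}. pdx_exists i (pdx j (\<lambda>y. u y t)) x \<and>
            pdx i (pdx j (\<lambda>y. u y t)) x = G2 i j (x,t))"
    by (rule choice[THEN exE])
  have "\<exists>G. continuous_on ?S G \<and>
        (\<forall>x\<in>\<Omega>. \<forall>t\<in>{0<..<T}. (deriv ^^ (dbar \<delta> - 1)) (u x) differentiable (at t) \<and>
            dtk (dbar \<delta>) u x t = G (x,t))"
    using reg unfolding C2dbar_def by blast
  then obtain Gk where Gk: "continuous_on ?S Gk"
    "\<forall>x\<in>\<Omega>. \<forall>t\<in>{0<..<T}. dtk (dbar \<delta>) u x t = Gk (x,t)" by blast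
  have cl: "\<And>x. x \<in> \<Omega> \<Longrightarrow> x \<in> closure \<Omega>" using closure_subset by blast
  have conv1: "\<forall>y\<in>\<Omega>. ((\<lambda>t. u y t) \<longlongrightarrow> \<phi>0 y) (at_right 0)"
  proof
    fix y assume y: "y \<in> \<Omega>"
    have "((\<lambda>t. (\<lambda>(x,t). u x t) (y,t)) \<longlongrightarrow> (\<lambda>(x,t). u x t) (y,0)) (at_right 0)"
      by (rule tend0[OF cu cl[OF y] T])
    then show "((\<lambda>t. u y t) \<longlongrightarrow> \<phi>0 y) (at_right 0)" using ini cl[OF y] by simp
  qed
  have D1: "pdx_exists i \<phi>0 y \<and> pdx i \<phi>0 y = G1 i (y,0)" if y: "y \<in> \<Omega>" for i y
    by (rule pdx_limit[where w="\<lambda>t z. u z t"]) (use dom(1) T G1 conv1 y in auto)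
  have D2: "pdx_exists i (pdx j \<phi>0) y \<and> pdx i (pdx j \<phi>0) y = G2 i j (y,0)" if y: "y \<in> \<Omega>" for i j y
  proof (rule pdx_limit[where w="\<lambda>t. pdx j (\<lambda>z. u z t)"])
    show "\<forall>y\<in>\<Omega>. ((\<lambda>t. pdx j (\<lambda>z. u z t) y) \<longlongrightarrow> pdx j \<phi>0 y) (at_right 0)"
    proof
      fix z assume z: "z \<in> \<Omega>"
      have "((\<lambda>t. G1 j (z,t)) \<longlongrightarrow> G1 j (z,0)) (at_right 0)"
        using tend0[of "closure \<Omega>" T "G1 j" z] G1 cl[OF z] T by blast
      moreover have "\<forall>\<^sub>F t in at_right 0. G1 j (z,t) = pdx j (\<lambda>y. u y t) z"
        unfolding eventually_at_right_field using T G1 z by (intro exI[of _ T]) auto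
      ultimately have "((\<lambda>t. pdx j (\<lambda>y. u y t) z) \<longlongrightarrow> G1 j (z,0)) (at_right 0)"
        by (rule Lim_transform_eventually)
      then show "((\<lambda>t. pdx j (\<lambda>z. u z t) z) \<longlongrightarrow> pdx j \<phi>0 z) (at_right 0)"
        using D1[OF z] by simp
    qed
  qed (use dom(1) T G2 y in auto)
  have cS: "compact ?S" using dom(3) by (intro compact_Times) (auto simp: compact_closure)
  have eq0: "Lop p q r 0 \<phi>0 x = f x 0" if x: "x \<in> \<Omega>" for x
  proof -
    have xc: "x \<in> closure \<Omega>" using cl[OF x] .
    have tp: "((\<lambda>t. p i j x t) \<longlongrightarrow> p i j x 0) (at_right 0)" for i j
      using tend0[OF cp xc T] by simp
    have tq: "((\<lambda>t. q i x t) \<longlongrightarrow> q i x 0) (at_right 0)" for i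
      using tend0[OF cq xc T] by simp
    have tr: "((\<lambda>t. r x t) \<longlongrightarrow> r x 0) (at_right 0)"
      using tend0[OF cr xc T] by simp
    have tf: "((\<lambda>t. f x t) \<longlongrightarrow> f x 0) (at_right 0)"
      using tend0[OF cf xc T] by simp
    have tu: "((\<lambda>t. u x t) \<longlongrightarrow> \<phi>0 x) (at_right 0)" using conv1 x by blast
    have tG1: "((\<lambda>t. G1 i (x,t)) \<longlongrightarrow> G1 i (x,0)) (at_right 0)" for i
      using tend0[of "closure \<Omega>" T "G1 i" x] G1 xc T by blast
    have tG2: "((\<lambda>t. G2 i j (x,t)) \<longlongrightarrow> G2 i j (x,0)) (at_right 0)" for i j
      using tend0[of "closure \<Omega>" T "G2 i j" x] G2 xc T by blast
    have tc: "((\<lambda>t. caputo \<delta> u x t) \<longlongrightarrow> 0) (at_right 0)"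
      by (rule caputo_lim[OF T delta Gk(1) cS]) (use Gk(2) x xc ce in auto)
    have "((\<lambda>t. caputo \<delta> u x t + (- (\<Sum>i\<in>UNIV. \<Sum>j\<in>UNIV. p i j x t * G2 i j (x,t))
       + (\<Sum>i\<in>UNIV. q i x t * G1 i (x,t)) + r x t * u x t)) \<longlongrightarrow>
       0 + (- (\<Sum>i\<in>UNIV. \<Sum>j\<in>UNIV. p i j x 0 * G2 i j (x,0))
       + (\<Sum>i\<in>UNIV. q i x 0 * G1 i (x,0)) + r x 0 * \<phi>0 x)) (at_right 0)"
      by (intro tendsto_add tendsto_minus tendsto_sum tendsto_mult tc tp tq tr tu tG1 tG2)
    moreover have "\<forall>\<^sub>F t in at_right 0. caputo \<delta> u x t + (- (\<Sum>i\<in>UNIV. \<Sum>j\<in>UNIV. p i j x t * G2 i j (x,t))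
       + (\<Sum>i\<in>UNIV. q i x t * G1 i (x,t)) + r x t * u x t) = f x t"
      unfolding eventually_at_right_field
    proof (intro exI[of _ T] conjI allI impI)
      fix t :: real assume t: "t > 0" "t < T"
      then have "Lop p q r t (\<lambda>y. u y t) x = - (\<Sum>i\<in>UNIV. \<Sum>j\<in>UNIV. p i j x t * G2 i j (x,t))
       + (\<Sum>i\<in>UNIV. q i x t * G1 i (x,t)) + r x t * u x t"
        unfolding Lop_def using G1 G2 x by simp
      moreover have "caputo \<delta> u x t + Lop p q r t (\<lambda>y. u y t) x = f x t"
        using eq x t by simp
      ultimately show "caputo \<delta> u x t + (- (\<Sum>i\<in>UNIV. \<Sum>j\<in>UNIV. p i j x t * G2 i j (x,t))
       + (\<Sum>i\<in>UNIV. q i x t * G1 i (x,t)) + r x t * u x t) = f x t"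
        by simp
    qed (use T in auto)
    ultimately have "((\<lambda>t. f x t) \<longlongrightarrow>
       0 + (- (\<Sum>i\<in>UNIV. \<Sum>j\<in>UNIV. p i j x 0 * G2 i j (x,0))
       + (\<Sum>i\<in>UNIV. q i x 0 * G1 i (x,0)) + r x 0 * \<phi>0 x)) (at_right 0)"
      by (rule Lim_transform_eventually)
    then have "f x 0 = 0 + (- (\<Sum>i\<in>UNIV. \<Sum>j\<in>UNIV. p i j x 0 * G2 i j (x,0))
       + (\<Sum>i\<in>UNIV. q i x 0 * G1 i (x,0)) + r x 0 * \<phi>0 x)"
      using tendsto_unique[OF trivial_limit_at_right_real tf] by blast
    then show ?thesis unfolding Lop_def using D1[OF x] D2[OF x] by simp
  qed
  have bvp: "bvp_sol \<Omega> p q r f \<psi> \<phi>0"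
    unfolding bvp_sol_def using c\<phi>0 D1 D2 eq0 compat by auto
  show ?thesis using bvp uniq by blast
qed

end
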